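(* Let $E,F$ be Banach spaces and $1\le p<\infty$. Then $|\!|\!|\cdot|\!|\!|_{p,\mathbb{P}}$ is a norm on $\Lambda_p^{\mathbb{P}}(E,F)$, and $(\Lambda_p^{\mathbb{P}}(E,F),|\!|\!|\cdot|\!|\!|_{p,\mathbb{P}})$ is a Banach space.
   Context: $(\Omega,\mathcal{F},\mathbb{P})$ is a probability space, $L^p(\Omega,E,\mathbb{P})$ the Bochner space. For a bounded linear $L:L^p(\Omega,E,\mathbb{P})\to F$, $|\!|\!|L|\!|\!|_{p,\mathbb{P}}:=\sup\{\sum_{i=1}^n\|L(\mathbf{1}_{A_i}x_i)\|_F:\ Y=\sum_{i=1}^n\mathbf{1}_{A_i}x_i,\ A_i\in\mathcal{F}\text{ pairwise disjoint},\ x_i\in E,\ \mathbb{E}\|Y\|_E^p\le1\}$, and $\Lambda_p^{\mathbb{P}}(E,F):=\{L\in L(L^p(\Omega,E,\mathbb{P}),F):|\!|\!|L|\!|\!|_{p,\mathbb{P}}<\infty\}$. *)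

theory Defs
  imports "HOL-Probability.Probability"
begin

type_synonym ('w,'e,'f) lp_op = "('w \<Rightarrow> 'e) \<Rightarrow> 'f"

definition strongly_measurable :: "'w measure \<Rightarrow> ('w \<Rightarrow> 'e::real_normed_vector) \<Rightarrow> bool" where
  "strongly_measurable M f \<longleftrightarrow> f \<in> borel_measurable M \<and>
     (\<exists>s. (\<forall>i. simple_function M (s i)) \<and> (\<forall>x\<in>space M. (\<lambda>i. s i x) \<longlonglongrightarrow> f x))"

text \<open>Representatives of elements of the Bochner space L^p(Omega, E, P).\<close>
definition Lp_space :: "real \<Rightarrow> 'w measure \<Rightarrow> ('w \<Rightarrow> 'e::real_normed_vector) set" where
  "Lp_space p M = {f. strongly_measurable M f \<and> integrable M (\<lambda>x. norm (f x) powr p)}"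

definition Lp_norm :: "real \<Rightarrow> 'w measure \<Rightarrow> ('w \<Rightarrow> 'e::real_normed_vector) \<Rightarrow> real" where
  "Lp_norm p M f = (\<integral>x. norm (f x) powr p \<partial>M) powr (1 / p)"

text \<open>Bounded linear operators L^p(Omega,E,P) -> F, represented as maps on representatives
  that are linear, respect a.e. equality, are bounded, and vanish off L^p (a normalisation
  making the representation of each operator unique).\<close>
definition bounded_linear_Lp ::
  "real \<Rightarrow> 'w measure \<Rightarrow> (('w \<Rightarrow> 'e::real_normed_vector) \<Rightarrow> 'f::real_normed_vector) \<Rightarrow> bool" where
  "bounded_linear_Lp p M L \<longleftrightarrow>
     (\<forall>f\<in>Lp_space p M. \<forall>g\<in>Lp_space p M. L (\<lambda>x. f x + g x) = L f + L g) \<and>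
     (\<forall>f\<in>Lp_space p M. \<forall>c. L (\<lambda>x. c *\<^sub>R f x) = c *\<^sub>R L f) \<and>
     (\<forall>f\<in>Lp_space p M. \<forall>g\<in>Lp_space p M. (AE x in M. f x = g x) \<longrightarrow> L f = L g) \<and>
     (\<exists>C. \<forall>f\<in>Lp_space p M. norm (L f) \<le> C * Lp_norm p M f) \<and>
     (\<forall>f. f \<notin> Lp_space p M \<longrightarrow> L f = 0)"

definition tnorm_set ::
  "real \<Rightarrow> 'w measure \<Rightarrow> (('w \<Rightarrow> 'e::real_normed_vector) \<Rightarrow> 'f::real_normed_vector) \<Rightarrow> real set" where
  "tnorm_set p M L =
     {(\<Sum>i<n. norm (L (\<lambda>\<omega>. indicator (A i) \<omega> *\<^sub>R x i))) | n A (x :: nat \<Rightarrow> 'e).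
        (\<forall>i<n. A i \<in> sets M) \<and> disjoint_family_on A {..<n} \<and>
        (\<integral>\<^sup>+\<omega>. ennreal (norm (\<Sum>i<n. indicator (A i) \<omega> *\<^sub>R x i) powr p) \<partial>M) \<le> 1}"

definition tnorm ::
  "real \<Rightarrow> 'w measure \<Rightarrow> (('w \<Rightarrow> 'e::real_normed_vector) \<Rightarrow> 'f::real_normed_vector) \<Rightarrow> real" where
  "tnorm p M L = Sup (tnorm_set p M L)"

definition Lambda_p ::
  "real \<Rightarrow> 'w measure \<Rightarrow> ((('w \<Rightarrow> 'e::real_normed_vector) \<Rightarrow> 'f::real_normed_vector)) set" where
  "Lambda_p p M = {L. bounded_linear_Lp p M L \<and> bdd_above (tnorm_set p M L)}"

end

theory Submission
  imports Defs
begin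


definition step :: "(nat \<Rightarrow> 'w set) \<Rightarrow> (nat \<Rightarrow> 'e::real_normed_vector) \<Rightarrow> nat \<Rightarrow> 'w \<Rightarrow> 'e" where
  "step A x n = (\<lambda>\<omega>. \<Sum>i<n. indicator (A i) \<omega> *\<^sub>R x i)"

lemma step_simple:
  assumes "\<forall>i<n. A i \<in> sets M"
  shows "simple_function M (step A x n)"
  unfolding step_def
  using assms by (intro simple_function_sum simple_function_compose1[OF simple_function_indicator]) auto

lemma norm_powr_meas:
  fixes f :: "'w \<Rightarrow> 'e::real_normed_vector"
  assumes "f \<in> borel_measurable M"
  shows "(\<lambda>x. norm (f x) powr p) \<in> borel_measurable M"
  using assms by measurable

lemma step_Lp:
  assumes M: "prob_space M" and p: "0 < p" and A: "\<forall>i<n. A i \<in> sets M"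
  shows "step A x n \<in> Lp_space p M"
proof -
  have fm: "finite_measure M" using M by (simp add: prob_space_def)
  have sf: "simple_function M (step A x n)" using step_simple A by blast
  have bm: "step A x n \<in> borel_measurable M" using borel_measurable_simple_function[OF sf] .
  have bd: "norm (step A x n \<omega>) \<le> (\<Sum>i<n. norm (x i))" for \<omega>
  proof -
    have "norm (step A x n \<omega>) \<le> (\<Sum>i<n. norm (indicator (A i) \<omega> *\<^sub>R x i))"
      unfolding step_def by (rule norm_sum)
    also have "\<dots> \<le> (\<Sum>i<n. norm (x i))"
      by (intro sum_mono) (auto simp: indicator_def)
    finally show ?thesis .
  qed
  have "integrable M (\<lambda>\<omega>. norm (step A x n \<omega>) powr p)"
  proof (rule finite_measure.integrable_const_bound[OF fm, where B="(\<Sum>i<n. norm (x i)) powr p"])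
    show "AE \<omega> in M. norm (norm (step A x n \<omega>) powr p) \<le> (\<Sum>i<n. norm (x i)) powr p"
      using bd p by (intro AE_I2) (auto intro!: powr_mono2)
    show "(\<lambda>\<omega>. norm (step A x n \<omega>) powr p) \<in> borel_measurable M"
      using norm_powr_meas[OF bm] .
  qed
  then show ?thesis
    unfolding Lp_space_def strongly_measurable_def using bm sf
    by (auto intro!: exI[of _ "\<lambda>_. step A x n"])
qed



lemma simple_step:
  fixes g :: "'w \<Rightarrow> 'e::real_normed_vector"
  assumes sf: "simple_function M g"
  shows "\<exists>n A x. (\<forall>i<n. A i \<in> sets M) \<and> disjoint_family_on A {..<n} \<and>
     (\<forall>\<omega>\<in>space M. g \<omega> = step A x n \<omega>)"
proof -
  let ?R = "g ` space M"
  have fin: "finite ?R" using sf by (simp add: simple_function_def)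
  obtain e where e: "bij_betw e {..<card ?R} ?R"
    using ex_bij_betw_nat_finite[OF fin] by (auto simp: atLeast0LessThan)
  define A where "A i = g -` {e i} \<inter> space M" for i
  have As: "\<forall>i<card ?R. A i \<in> sets M"
    unfolding A_def using sf by (auto intro: simple_functionD(2))
  have disj: "disjoint_family_on A {..<card ?R}"
    unfolding disjoint_family_on_def A_def using e
    by (auto simp: bij_betw_def inj_on_def)
  have rep: "g \<omega> = step A e (card ?R) \<omega>" if w: "\<omega> \<in> space M" for \<omega>
  proof -
    have "step A e (card ?R) \<omega> = (\<Sum>i<card ?R. (\<lambda>v. indicator (g -` {v} \<inter> space M) \<omega> *\<^sub>R v) (e i))"
      by (simp add: step_def A_def)
    also have "\<dots> = (\<Sum>v\<in>?R. indicator (g -` {v} \<inter> space M) \<omega> *\<^sub>R v)"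
      by (rule sum.reindex_bij_betw[OF e])
    also have "\<dots> = (\<Sum>v\<in>?R. if v = g \<omega> then g \<omega> else 0)"
      by (rule sum.cong) (auto simp: indicator_def w)
    also have "\<dots> = g \<omega>" using fin w by (simp add: sum.delta')
    finally show ?thesis by simp
  qed
  show ?thesis using As disj rep by blast
qed



lemma Lp_density:
  fixes f :: "'w \<Rightarrow> 'e::real_normed_vector"
  assumes p: "0 < p" and f: "f \<in> Lp_space p M"
  shows "\<exists>s. (\<forall>k. simple_function M (s k)) \<and>
     (\<lambda>k. \<integral>x. norm (f x - s k x) powr p \<partial>M) \<longlonglongrightarrow> 0 \<and>
     (\<lambda>k. \<integral>x. norm (s k x) powr p \<partial>M) \<longlonglongrightarrow> (\<integral>x. norm (f x) powr p \<partial>M)"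
proof -
  from f obtain t where fb[measurable]: "f \<in> borel_measurable M"
    and t: "\<And>i. simple_function M (t i)" and lim: "\<And>x. x \<in> space M \<Longrightarrow> (\<lambda>i. t i x) \<longlonglongrightarrow> f x"
    and int: "integrable M (\<lambda>x. norm (f x) powr p)"
    unfolding Lp_space_def strongly_measurable_def by blast
  have tb[measurable]: "t i \<in> borel_measurable M" for i
    using borel_measurable_simple_function[OF t] .
  define s where "s i x = (if norm (t i x) \<le> 2 * norm (f x) then t i x else 0)" for i x
  have ss: "simple_function M (s i)" for i
    unfolding s_def by (intro simple_function_If t simple_function_const) measurable
  have sb[measurable]: "s i \<in> borel_measurable M" for i
    using borel_measurable_simple_function[OF ss] .
  have sbd: "norm (s i x) \<le> 2 * norm (f x)" for i x
    by (simp add: s_def)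
  have slim: "(\<lambda>i. s i x) \<longlonglongrightarrow> f x" if x: "x \<in> space M" for x
  proof (cases "f x = 0")
    case True
    then have "s i x = 0" for i using sbd[of i x] by simp
    then show ?thesis using True by simp
  next
    case False
    have "(\<lambda>i. norm (t i x)) \<longlonglongrightarrow> norm (f x)" using lim[OF x] by (rule tendsto_norm)
    moreover have "norm (f x) < 2 * norm (f x)" using False by simp
    ultimately have "eventually (\<lambda>i. norm (t i x) < 2 * norm (f x)) sequentially"
      by (rule order_tendstoD(2))
    then have "eventually (\<lambda>i. t i x = s i x) sequentially"
      by eventually_elim (simp add: s_def)
    with lim[OF x] show ?thesis by (rule Lim_transform_eventually)
  qed
  have DC1: "(\<lambda>k. \<integral>x. norm (s k x) powr p \<partial>M) \<longlonglongrightarrow> (\<integral>x. norm (f x) powr p \<partial>M)"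
  proof (rule integral_dominated_convergence[where w="\<lambda>x. 2 powr p * norm (f x) powr p"])
    show "(\<lambda>x. norm (f x) powr p) \<in> borel_measurable M" by measurable
    show "(\<lambda>x. norm (s i x) powr p) \<in> borel_measurable M" for i by measurable
    show "integrable M (\<lambda>x. 2 powr p * norm (f x) powr p)" using int by simp
    show "AE x in M. (\<lambda>i. norm (s i x) powr p) \<longlonglongrightarrow> norm (f x) powr p"
    proof (intro AE_I2 impI)
      fix x assume x: "x \<in> space M"
      show "(\<lambda>i. norm (s i x) powr p) \<longlonglongrightarrow> norm (f x) powr p"
        by (rule tendsto_powr'[OF tendsto_norm[OF slim[OF x]] tendsto_const]) (use p in auto)
    qed
    show "AE x in M. norm (norm (s i x) powr p) \<le> 2 powr p * norm (f x) powr p" for i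
    proof (intro AE_I2)
      fix x
      have "norm (s i x) powr p \<le> (2 * norm (f x)) powr p"
        using sbd[of i x] p by (intro powr_mono2) auto
      then show "norm (norm (s i x) powr p) \<le> 2 powr p * norm (f x) powr p"
        by (simp add: powr_mult)
    qed
  qed
  have DC2: "(\<lambda>k. \<integral>x. norm (f x - s k x) powr p \<partial>M) \<longlonglongrightarrow> (\<integral>x. 0 \<partial>M)"
  proof (rule integral_dominated_convergence[where w="\<lambda>x. 3 powr p * norm (f x) powr p"])
    show "(\<lambda>x. 0::real) \<in> borel_measurable M" by measurable
    show "(\<lambda>x. norm (f x - s i x) powr p) \<in> borel_measurable M" for i
    proof (rule borel_measurable_LIMSEQ_metric[where f="\<lambda>j x. norm (t j x - s i x) powr p"])
      show "(\<lambda>x. norm (t j x - s i x) powr p) \<in> borel_measurable M" for j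
        by (rule borel_measurable_simple_function[OF simple_function_compose2[where h="\<lambda>a b. norm (a - b) powr p", OF t ss]])
      show "(\<lambda>j. norm (t j x - s i x) powr p) \<longlonglongrightarrow> norm (f x - s i x) powr p" if "x \<in> space M" for x
        by (rule tendsto_powr'[OF tendsto_norm[OF tendsto_diff[OF lim[OF that] tendsto_const]] tendsto_const]) (use p in auto)
    qed
    show "integrable M (\<lambda>x. 3 powr p * norm (f x) powr p)" using int by simp
    show "AE x in M. (\<lambda>i. norm (f x - s i x) powr p) \<longlonglongrightarrow> 0"
    proof (intro AE_I2 impI)
      fix x assume x: "x \<in> space M"
      have "(\<lambda>i. norm (f x - s i x) powr p) \<longlonglongrightarrow> norm (f x - f x) powr p"
        by (rule tendsto_powr'[OF tendsto_norm[OF tendsto_diff[OF tendsto_const slim[OF x]]] tendsto_const]) (use p in auto)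
      then show "(\<lambda>i. norm (f x - s i x) powr p) \<longlonglongrightarrow> 0" by simp
    qed
    show "AE x in M. norm (norm (f x - s i x) powr p) \<le> 3 powr p * norm (f x) powr p" for i
    proof (intro AE_I2)
      fix x
      have "norm (f x - s i x) \<le> norm (f x) + norm (s i x)" by (rule norm_triangle_ineq4)
      also have "\<dots> \<le> 3 * norm (f x)" using sbd[of i x] by simp
      finally have "norm (f x - s i x) powr p \<le> (3 * norm (f x)) powr p"
        using p by (intro powr_mono2) auto
      then show "norm (norm (f x - s i x) powr p) \<le> 3 powr p * norm (f x) powr p"
        by (simp add: powr_mult)
    qed
  qed
  show ?thesis using ss DC1 DC2 by auto
qed



lemma Lp_norm_nonneg: "0 \<le> Lp_norm p M f"
  by (simp add: Lp_norm_def)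

lemma L_add: "bounded_linear_Lp p M L \<Longrightarrow> f \<in> Lp_space p M \<Longrightarrow> g \<in> Lp_space p M \<Longrightarrow>
   L (\<lambda>x. f x + g x) = L f + L g"
  unfolding bounded_linear_Lp_def by blast

lemma L_scale: "bounded_linear_Lp p M L \<Longrightarrow> f \<in> Lp_space p M \<Longrightarrow>
   L (\<lambda>x. c *\<^sub>R f x) = c *\<^sub>R L f"
  unfolding bounded_linear_Lp_def by blast

lemma L_ae: "bounded_linear_Lp p M L \<Longrightarrow> f \<in> Lp_space p M \<Longrightarrow> g \<in> Lp_space p M \<Longrightarrow>
   (AE x in M. f x = g x) \<Longrightarrow> L f = L g"
  unfolding bounded_linear_Lp_def by blast

lemma L_off: "bounded_linear_Lp p M L \<Longrightarrow> f \<notin> Lp_space p M \<Longrightarrow> L f = 0"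
  unfolding bounded_linear_Lp_def by blast

lemma L_bound_all:
  assumes "bounded_linear_Lp p M L"
  shows "\<exists>C\<ge>0. \<forall>g. norm (L g) \<le> C * Lp_norm p M g"
proof -
  obtain C where C: "\<forall>f\<in>Lp_space p M. norm (L f) \<le> C * Lp_norm p M f"
    using assms unfolding bounded_linear_Lp_def by (elim conjE) blast
  have "norm (L g) \<le> max C 0 * Lp_norm p M g" for g
  proof (cases "g \<in> Lp_space p M")
    case True
    then have "norm (L g) \<le> C * Lp_norm p M g" using C by blast
    also have "\<dots> \<le> max C 0 * Lp_norm p M g" by (intro mult_right_mono) (auto simp: Lp_norm_nonneg)
    finally show ?thesis .
  next
    case False
    then show ?thesis using L_off[OF assms False] by (simp add: Lp_norm_nonneg)
  qed
  then show ?thesis by (intro exI[of _ "max C 0"]) auto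
qed

lemma single_eq_step: "(\<lambda>\<omega>. indicator B \<omega> *\<^sub>R y) = step (\<lambda>_. B) (\<lambda>_. y) 1"
  by (simp add: step_def)

lemma single_Lp:
  assumes "prob_space M" "0 < p" "B \<in> sets M"
  shows "(\<lambda>\<omega>. indicator B \<omega> *\<^sub>R (y::'e::real_normed_vector)) \<in> Lp_space p M"
  unfolding single_eq_step using assms by (intro step_Lp) auto

lemma L_step_sum:
  assumes M: "prob_space M" and p: "0 < p" and L: "bounded_linear_Lp p M L"
    and A: "\<forall>i<n. A i \<in> sets M"
  shows "L (step A x n) = (\<Sum>i<n. L (\<lambda>\<omega>. indicator (A i) \<omega> *\<^sub>R x i))"
  using A
proof (induction n)
  case 0
  have z: "step A x 0 \<in> Lp_space p M" using step_Lp[OF M p] by auto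
  have "L (\<lambda>\<omega>. 0 *\<^sub>R step A x 0 \<omega>) = 0 *\<^sub>R L (step A x 0)"
    by (rule L_scale[OF L z])
  then show ?case by (simp add: step_def)
next
  case (Suc n)
  have A': "\<forall>i<n. A i \<in> sets M" using Suc.prems by auto
  have eq: "step A x (Suc n) = (\<lambda>\<omega>. step A x n \<omega> + indicator (A n) \<omega> *\<^sub>R x n)"
    by (simp add: step_def)
  have "L (step A x (Suc n)) = L (step A x n) + L (\<lambda>\<omega>. indicator (A n) \<omega> *\<^sub>R x n)"
    unfolding eq using Suc.prems by (intro L_add[OF L] step_Lp[OF M p A'] single_Lp[OF M p]) auto
  then show ?case using Suc.IH[OF A'] by simp
qed

lemma tnorm_setI:
  fixes n :: nat
  assumes "\<forall>i<n. A i \<in> sets M" "disjoint_family_on A {..<n}"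
    "(\<integral>\<^sup>+\<omega>. ennreal (norm (\<Sum>i<n. indicator (A i) \<omega> *\<^sub>R x i) powr p) \<partial>M) \<le> 1"
  shows "(\<Sum>i<n. norm (L (\<lambda>\<omega>. indicator (A i) \<omega> *\<^sub>R x i))) \<in> tnorm_set p M L"
  unfolding tnorm_set_def using assms by fast

lemma tnorm_upper:
  fixes n :: nat
  assumes L: "L \<in> Lambda_p p M" and A: "\<forall>i<n. A i \<in> sets M" and d: "disjoint_family_on A {..<n}"
    and I: "(\<integral>\<^sup>+\<omega>. ennreal (norm (\<Sum>i<n. indicator (A i) \<omega> *\<^sub>R x i) powr p) \<partial>M) \<le> 1"
  shows "(\<Sum>i<n. norm (L (\<lambda>\<omega>. indicator (A i) \<omega> *\<^sub>R x i))) \<le> tnorm p M L"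
proof -
  have "(\<Sum>i<n. norm (L (\<lambda>\<omega>. indicator (A i) \<omega> *\<^sub>R x i))) \<in> tnorm_set p M L"
    using A d I by (rule tnorm_setI)
  then show ?thesis unfolding tnorm_def using L unfolding Lambda_p_def by (auto intro: cSup_upper)
qed

lemma zero_in_tnorm_set: "0 \<in> tnorm_set p M L"
  using tnorm_setI[of 0 "\<lambda>_. {}" M "\<lambda>_. 0" p L] by (simp add: disjoint_family_on_def)

lemma tnorm_nonneg:
  assumes "bdd_above (tnorm_set p M L)"
  shows "0 \<le> tnorm p M L"
  unfolding tnorm_def by (rule cSup_upper2[OF zero_in_tnorm_set]) (auto simp: assms)



lemma K_step:
  fixes n :: nat and x :: "nat \<Rightarrow> 'e::real_normed_vector"
  assumes M: "prob_space M" and p: "0 < p" and L: "L \<in> Lambda_p p M"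
    and A: "\<forall>i<n. A i \<in> sets M" and d: "disjoint_family_on A {..<n}"
  shows "norm (L (step A x n)) \<le> tnorm p M L * Lp_norm p M (step A x n)"
proof -
  have bl: "bounded_linear_Lp p M L" and bdd: "bdd_above (tnorm_set p M L)"
    using L unfolding Lambda_p_def by auto
  let ?s = "step A x n"
  let ?T = "tnorm p M L"
  define I where "I = (\<integral>\<omega>. norm (?s \<omega>) powr p \<partial>M)"
  have intI: "integrable M (\<lambda>\<omega>. norm (?s \<omega>) powr p)"
    using step_Lp[OF M p A] unfolding Lp_space_def by auto
  have I0: "0 \<le> I" unfolding I_def by (rule integral_nonneg_AE) auto
  define N where "N = Lp_norm p M ?s"
  have N0: "0 \<le> N" unfolding N_def by (rule Lp_norm_nonneg)
  have NI: "N = I powr (1/p)" unfolding N_def Lp_norm_def I_def ..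
  have IN: "I = N powr p"
    unfolding NI powr_powr using p I0 by (simp add: powr_one)
  have T0: "0 \<le> ?T" by (rule tnorm_nonneg[OF bdd])
  have sumeq: "L ?s = (\<Sum>i<n. L (\<lambda>\<omega>. indicator (A i) \<omega> *\<^sub>R x i))"
    by (rule L_step_sum[OF M p bl A])
  have key: "(\<Sum>i<n. norm (L (\<lambda>\<omega>. indicator (A i) \<omega> *\<^sub>R x i))) \<le> t * ?T" if t: "N < t" for t
  proof -
    have t0: "0 < t" using t N0 by linarith
    define y where "y i = (1/t) *\<^sub>R x i" for i
    have sy: "(\<lambda>\<omega>. \<Sum>i<n. indicator (A i) \<omega> *\<^sub>R y i) = (\<lambda>\<omega>. (1/t) *\<^sub>R ?s \<omega>)"
      unfolding y_def step_def scaleR_sum_right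
      by (intro ext sum.cong refl) (simp only: scaleR_scaleR mult.commute)
    have pw: "norm ((1/t) *\<^sub>R v) powr p = (1/t) powr p * norm v powr p" for v :: 'e
      using t0 by (simp add: powr_divide)
    have nn: "(\<integral>\<^sup>+\<omega>. ennreal (norm (\<Sum>i<n. indicator (A i) \<omega> *\<^sub>R y i) powr p) \<partial>M)
        = ennreal ((1/t) powr p * I)"
    proof -
      have "(\<integral>\<^sup>+\<omega>. ennreal (norm (\<Sum>i<n. indicator (A i) \<omega> *\<^sub>R y i) powr p) \<partial>M)
          = (\<integral>\<^sup>+\<omega>. ennreal ((1/t) powr p * norm (?s \<omega>) powr p) \<partial>M)"
        by (simp only: fun_cong[OF sy] pw)
      also have "\<dots> = ennreal (\<integral>\<omega>. (1/t) powr p * norm (?s \<omega>) powr p \<partial>M)"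
        using intI by (intro nn_integral_eq_integral) auto
      also have "\<dots> = ennreal ((1/t) powr p * I)" unfolding I_def by simp
      finally show ?thesis .
    qed
    have le1: "(1/t) powr p * I \<le> 1"
    proof -
      have "N powr p \<le> t powr p" using N0 t p by (intro powr_mono2) auto
      moreover have "0 < t powr p" using t0 by simp
      ultimately show ?thesis unfolding IN using t0 by (simp add: powr_divide)
    qed
    have el: "(\<Sum>i<n. norm (L (\<lambda>\<omega>. indicator (A i) \<omega> *\<^sub>R y i))) \<le> ?T"
      by (rule tnorm_upper[OF L A d]) (simp only: nn ennreal_leI[OF le1] ennreal_1[symmetric])
    have each: "L (\<lambda>\<omega>. indicator (A i) \<omega> *\<^sub>R y i) = (1/t) *\<^sub>R L (\<lambda>\<omega>. indicator (A i) \<omega> *\<^sub>R x i)"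
      if i: "i < n" for i
    proof -
      have e1: "(\<lambda>\<omega>. indicator (A i) \<omega> *\<^sub>R y i) = (\<lambda>\<omega>. (1/t) *\<^sub>R (indicator (A i) \<omega> *\<^sub>R x i))"
        by (simp add: y_def mult.commute)
      have "L (\<lambda>\<omega>. (1/t) *\<^sub>R (indicator (A i) \<omega> *\<^sub>R x i)) = (1/t) *\<^sub>R L (\<lambda>\<omega>. indicator (A i) \<omega> *\<^sub>R x i)"
        using A i by (intro L_scale[OF bl] single_Lp[OF M p]) auto
      then show ?thesis by (simp only: e1)
    qed
    have "(\<Sum>i<n. norm (L (\<lambda>\<omega>. indicator (A i) \<omega> *\<^sub>R y i)))
        = (1/t) * (\<Sum>i<n. norm (L (\<lambda>\<omega>. indicator (A i) \<omega> *\<^sub>R x i)))"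
      using t0 by (simp add: each sum_distrib_left)
    with el have "(1/t) * (\<Sum>i<n. norm (L (\<lambda>\<omega>. indicator (A i) \<omega> *\<^sub>R x i))) \<le> ?T" by simp
    then show ?thesis using t0 by (simp add: field_simps)
  qed
  have main: "norm (L ?s) \<le> t * ?T" if "N < t" for t
  proof -
    have "norm (L ?s) \<le> (\<Sum>i<n. norm (L (\<lambda>\<omega>. indicator (A i) \<omega> *\<^sub>R x i)))"
      unfolding sumeq by (rule norm_sum)
    also have "\<dots> \<le> t * ?T" by (rule key[OF that])
    finally show ?thesis .
  qed
  show ?thesis
  proof (rule ccontr)
    assume "\<not> ?thesis"
    then have lt: "?T * N < norm (L ?s)" unfolding N_def by simp
    show False
    proof (cases "?T = 0")
      case True
      then show False using main[of "N + 1"] lt by simp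
    next
      case False
      then have Tp: "0 < ?T" using T0 by simp
      define t where "t = (?T * N + norm (L ?s)) / (2 * ?T)"
      have "N < t" unfolding t_def using Tp lt by (simp add: field_simps)
      moreover have "t * ?T < norm (L ?s)" unfolding t_def using Tp lt by (simp add: field_simps)
      ultimately show False using main by force
    qed
  qed
qed



lemma K_gen:
  fixes f :: "'w \<Rightarrow> 'e::real_normed_vector"
  assumes M: "prob_space M" and p: "0 < p" and L: "L \<in> Lambda_p p M" and f: "f \<in> Lp_space p M"
  shows "norm (L f) \<le> tnorm p M L * Lp_norm p M f"
proof -
  have bl: "bounded_linear_Lp p M L" using L unfolding Lambda_p_def by auto
  let ?T = "tnorm p M L"
  obtain s where s: "\<And>k. simple_function M (s k)"
    and c1: "(\<lambda>k. \<integral>x. norm (f x - s k x) powr p \<partial>M) \<longlonglongrightarrow> 0"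
    and c2: "(\<lambda>k. \<integral>x. norm (s k x) powr p \<partial>M) \<longlonglongrightarrow> (\<integral>x. norm (f x) powr p \<partial>M)"
    using Lp_density[OF p f] by blast
  have "\<forall>k. \<exists>n A x. (\<forall>i<n. A i \<in> sets M) \<and> disjoint_family_on A {..<n} \<and>
     (\<forall>\<omega>\<in>space M. s k \<omega> = step A x n \<omega>)"
    using simple_step[OF s] by blast
  then obtain n A x where As: "\<And>k. \<forall>i<n k. A k i \<in> sets M"
    and d: "\<And>k. disjoint_family_on (A k) {..<n k}"
    and rep: "\<And>k. \<forall>\<omega>\<in>space M. s k \<omega> = step (A k) (x k) (n k) \<omega>"
    by metis
  define u where "u k = step (A k) (x k) (n k)" for k
  have uLp: "u k \<in> Lp_space p M" for k unfolding u_def by (rule step_Lp[OF M p As])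
  obtain C where C0: "C \<ge> 0" and C: "\<And>g. norm (L g) \<le> C * Lp_norm p M g"
    using L_bound_all[OF bl] by blast
  have ineq: "norm (L f) \<le> C * (\<integral>x. norm (f x - s k x) powr p \<partial>M) powr (1/p)
      + ?T * (\<integral>x. norm (s k x) powr p \<partial>M) powr (1/p)" for k
  proof -
    define v where "v = step (A k) (\<lambda>i. - x k i) (n k)"
    have vLp: "v \<in> Lp_space p M" unfolding v_def by (rule step_Lp[OF M p As])
    have veq: "v = (\<lambda>\<omega>. (-1) *\<^sub>R u k \<omega>)"
      unfolding v_def u_def step_def by (simp add: sum_negf)
    have Lv: "L v = - L (u k)"
      unfolding veq using L_scale[OF bl uLp[of k], of "-1"] by simp
    have "L (\<lambda>\<omega>. f \<omega> + v \<omega>) = L f + L v" by (rule L_add[OF bl f vLp])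
    moreover have "(\<lambda>\<omega>. f \<omega> + v \<omega>) = (\<lambda>\<omega>. f \<omega> - u k \<omega>)" unfolding veq by simp
    ultimately have Lf: "L f = L (\<lambda>\<omega>. f \<omega> - u k \<omega>) + L (u k)" using Lv by simp
    have i1: "(\<integral>x. norm (f x - u k x) powr p \<partial>M) = (\<integral>x. norm (f x - s k x) powr p \<partial>M)"
      using rep[of k] unfolding u_def by (intro Bochner_Integration.integral_cong) auto
    have i2: "(\<integral>x. norm (u k x) powr p \<partial>M) = (\<integral>x. norm (s k x) powr p \<partial>M)"
      using rep[of k] unfolding u_def by (intro Bochner_Integration.integral_cong) auto
    have "norm (L f) \<le> norm (L (\<lambda>\<omega>. f \<omega> - u k \<omega>)) + norm (L (u k))"
      unfolding Lf by (rule norm_triangle_ineq)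
    also have "\<dots> \<le> C * Lp_norm p M (\<lambda>\<omega>. f \<omega> - u k \<omega>) + ?T * Lp_norm p M (u k)"
      using C K_step[OF M p L As d] unfolding u_def by (intro add_mono) auto
    also have "\<dots> = C * (\<integral>x. norm (f x - s k x) powr p \<partial>M) powr (1/p)
      + ?T * (\<integral>x. norm (s k x) powr p \<partial>M) powr (1/p)"
      unfolding Lp_norm_def i1 i2 ..
    finally show ?thesis .
  qed
  have nn1: "\<forall>\<^sub>F k in sequentially. 0 \<le> (\<integral>x. norm (f x - s k x) powr p \<partial>M)"
    by (intro always_eventually allI integral_nonneg_AE) auto
  have nn2: "\<forall>\<^sub>F k in sequentially. 0 \<le> (\<integral>x. norm (s k x) powr p \<partial>M)"
    by (intro always_eventually allI integral_nonneg_AE) auto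
  have l1: "(\<lambda>k. (\<integral>x. norm (f x - s k x) powr p \<partial>M) powr (1/p)) \<longlonglongrightarrow> 0 powr (1/p)"
    by (rule tendsto_powr'[OF c1 tendsto_const]) (use p nn1 in auto)
  have l2: "(\<lambda>k. (\<integral>x. norm (s k x) powr p \<partial>M) powr (1/p)) \<longlonglongrightarrow> (\<integral>x. norm (f x) powr p \<partial>M) powr (1/p)"
    by (rule tendsto_powr'[OF c2 tendsto_const]) (use p nn2 in auto)
  have lim: "(\<lambda>k. C * (\<integral>x. norm (f x - s k x) powr p \<partial>M) powr (1/p)
      + ?T * (\<integral>x. norm (s k x) powr p \<partial>M) powr (1/p)) \<longlonglongrightarrow> C * 0 powr (1/p) + ?T * Lp_norm p M f"
    unfolding Lp_norm_def by (intro tendsto_add tendsto_mult tendsto_const l1 l2)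
  have "norm (L f) \<le> C * 0 powr (1/p) + ?T * Lp_norm p M f"
    by (rule tendsto_le[OF sequentially_bot lim tendsto_const]) (use ineq in auto)
  then show ?thesis by simp
qed



lemma tnorm_set_le:
  fixes L :: "('w \<Rightarrow> 'e::real_normed_vector) \<Rightarrow> 'f::real_normed_vector"
  assumes B: "\<And>(n::nat) A (x::nat \<Rightarrow> 'e). \<forall>i<n. A i \<in> sets M \<Longrightarrow> disjoint_family_on A {..<n} \<Longrightarrow>
      (\<integral>\<^sup>+\<omega>. ennreal (norm (\<Sum>i<n. indicator (A i) \<omega> *\<^sub>R x i) powr p) \<partial>M) \<le> 1 \<Longrightarrow>
      (\<Sum>i<n. norm (L (\<lambda>\<omega>. indicator (A i) \<omega> *\<^sub>R x i))) \<le> B"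
  shows "bdd_above (tnorm_set p M L)" and "tnorm p M L \<le> B"
proof -
  have le: "y \<le> B" if "y \<in> tnorm_set p M L" for y
    using that B unfolding tnorm_set_def by blast
  then show "bdd_above (tnorm_set p M L)" by (rule bdd_aboveI)
  show "tnorm p M L \<le> B" unfolding tnorm_def
    by (rule cSup_least) (use le zero_in_tnorm_set[of p M L] in auto)
qed

lemma Lambda_zero: "(\<lambda>_. 0) \<in> (Lambda_p p M :: (('w \<Rightarrow> 'e::real_normed_vector) \<Rightarrow> 'f::real_normed_vector) set)"
proof -
  have "bounded_linear_Lp p M (\<lambda>_. 0::'f::real_normed_vector)"
    unfolding bounded_linear_Lp_def by (auto intro!: exI[of _ 0])
  moreover have "bdd_above (tnorm_set p M (\<lambda>_. 0::'f))"
    by (rule tnorm_set_le(1)[where B=0]) simp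
  ultimately show ?thesis unfolding Lambda_p_def by auto
qed

lemma tnorm_zero: "tnorm p M (\<lambda>_::'w \<Rightarrow> 'e::real_normed_vector. 0::'f::real_normed_vector) = 0"
proof -
  have a: "tnorm p M (\<lambda>_::'w \<Rightarrow> 'e. 0::'f) \<le> 0" by (rule tnorm_set_le(2)[where B=0]) simp
  have b: "bdd_above (tnorm_set p M (\<lambda>_::'w \<Rightarrow> 'e. 0::'f))"
    by (rule tnorm_set_le(1)[where B=0]) simp
  show ?thesis using a tnorm_nonneg[OF b] by linarith
qed

lemma Lambda_add:
  fixes L K :: "('w \<Rightarrow> 'e::real_normed_vector) \<Rightarrow> 'f::real_normed_vector"
  assumes L: "L \<in> Lambda_p p M" and K: "K \<in> Lambda_p p M"
  shows "(\<lambda>Y. L Y + K Y) \<in> Lambda_p p M"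
    and "tnorm p M (\<lambda>Y. L Y + K Y) \<le> tnorm p M L + tnorm p M K"
proof -
  have bL: "bounded_linear_Lp p M L" and bK: "bounded_linear_Lp p M K"
    using L K unfolding Lambda_p_def by auto
  obtain C1 where C1: "\<And>g. norm (L g) \<le> C1 * Lp_norm p M g" using L_bound_all[OF bL] by blast
  obtain C2 where C2: "\<And>g. norm (K g) \<le> C2 * Lp_norm p M g" using L_bound_all[OF bK] by blast
  have bl: "bounded_linear_Lp p M (\<lambda>Y. L Y + K Y)"
    unfolding bounded_linear_Lp_def
  proof (intro conjI ballI allI impI)
    fix f g :: "'w \<Rightarrow> 'e" assume f: "f \<in> Lp_space p M" and g: "g \<in> Lp_space p M"
    show "L (\<lambda>x. f x + g x) + K (\<lambda>x. f x + g x) = L f + K f + (L g + K g)"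
      using L_add[OF bL f g] L_add[OF bK f g] by simp
    assume "AE x in M. f x = g x"
    then show "L f + K f = L g + K g" using L_ae[OF bL f g] L_ae[OF bK f g] by simp
  next
    fix f :: "'w \<Rightarrow> 'e" and c assume f: "f \<in> Lp_space p M"
    show "L (\<lambda>x. c *\<^sub>R f x) + K (\<lambda>x. c *\<^sub>R f x) = c *\<^sub>R (L f + K f)"
      using L_scale[OF bL f] L_scale[OF bK f] by (simp add: scaleR_add_right)
  next
    fix f :: "'w \<Rightarrow> 'e" assume "f \<notin> Lp_space p M"
    then show "L f + K f = 0" using L_off[OF bL] L_off[OF bK] by simp
  next
    show "\<exists>C. \<forall>f\<in>Lp_space p M. norm (L f + K f) \<le> C * Lp_norm p M f"
    proof (intro exI ballI)
      fix f :: "'w \<Rightarrow> 'e"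
      have "norm (L f + K f) \<le> norm (L f) + norm (K f)" by (rule norm_triangle_ineq)
      also have "\<dots> \<le> C1 * Lp_norm p M f + C2 * Lp_norm p M f" using C1 C2 by (rule add_mono)
      finally show "norm (L f + K f) \<le> (C1 + C2) * Lp_norm p M f" by (simp add: distrib_right)
    qed
  qed
  have B: "(\<Sum>i<n. norm (L (\<lambda>\<omega>. indicator (A i) \<omega> *\<^sub>R x i) + K (\<lambda>\<omega>. indicator (A i) \<omega> *\<^sub>R x i)))
      \<le> tnorm p M L + tnorm p M K"
    if "\<forall>i<n. A i \<in> sets M" "disjoint_family_on A {..<n}"
      "(\<integral>\<^sup>+\<omega>. ennreal (norm (\<Sum>i<n. indicator (A i) \<omega> *\<^sub>R x i) powr p) \<partial>M) \<le> 1" for n :: nat and A x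
  proof -
    have "(\<Sum>i<n. norm (L (\<lambda>\<omega>. indicator (A i) \<omega> *\<^sub>R x i) + K (\<lambda>\<omega>. indicator (A i) \<omega> *\<^sub>R x i)))
      \<le> (\<Sum>i<n. norm (L (\<lambda>\<omega>. indicator (A i) \<omega> *\<^sub>R x i))) + (\<Sum>i<n. norm (K (\<lambda>\<omega>. indicator (A i) \<omega> *\<^sub>R x i)))"
      unfolding sum.distrib[symmetric] by (intro sum_mono norm_triangle_ineq)
    also have "\<dots> \<le> tnorm p M L + tnorm p M K"
      by (intro add_mono tnorm_upper[OF L that] tnorm_upper[OF K that])
    finally show ?thesis .
  qed
  have "bdd_above (tnorm_set p M (\<lambda>Y. L Y + K Y))" by (rule tnorm_set_le(1)) (rule B)
  then show "(\<lambda>Y. L Y + K Y) \<in> Lambda_p p M" using bl unfolding Lambda_p_def by auto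
  show "tnorm p M (\<lambda>Y. L Y + K Y) \<le> tnorm p M L + tnorm p M K" by (rule tnorm_set_le(2)) (rule B)
qed

lemma Lambda_scale:
  fixes L :: "('w \<Rightarrow> 'e::real_normed_vector) \<Rightarrow> 'f::real_normed_vector"
  assumes L: "L \<in> Lambda_p p M"
  shows "(\<lambda>Y. c *\<^sub>R L Y) \<in> Lambda_p p M"
    and "tnorm p M (\<lambda>Y. c *\<^sub>R L Y) \<le> \<bar>c\<bar> * tnorm p M L"
proof -
  have bL: "bounded_linear_Lp p M L" using L unfolding Lambda_p_def by auto
  obtain C1 where C1: "\<And>g. norm (L g) \<le> C1 * Lp_norm p M g" using L_bound_all[OF bL] by blast
  have bl: "bounded_linear_Lp p M (\<lambda>Y. c *\<^sub>R L Y)"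
    unfolding bounded_linear_Lp_def
  proof (intro conjI ballI allI impI)
    fix f g :: "'w \<Rightarrow> 'e" assume f: "f \<in> Lp_space p M" and g: "g \<in> Lp_space p M"
    show "c *\<^sub>R L (\<lambda>x. f x + g x) = c *\<^sub>R L f + c *\<^sub>R L g"
      using L_add[OF bL f g] by (simp add: scaleR_add_right)
    assume "AE x in M. f x = g x"
    then show "c *\<^sub>R L f = c *\<^sub>R L g" using L_ae[OF bL f g] by simp
  next
    fix f :: "'w \<Rightarrow> 'e" and d assume f: "f \<in> Lp_space p M"
    show "c *\<^sub>R L (\<lambda>x. d *\<^sub>R f x) = d *\<^sub>R (c *\<^sub>R L f)"
      using L_scale[OF bL f] by (simp add: mult.commute)
  next
    fix f :: "'w \<Rightarrow> 'e" assume "f \<notin> Lp_space p M"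
    then show "c *\<^sub>R L f = 0" using L_off[OF bL] by simp
  next
    show "\<exists>C. \<forall>f\<in>Lp_space p M. norm (c *\<^sub>R L f) \<le> C * Lp_norm p M f"
    proof (intro exI ballI)
      fix f :: "'w \<Rightarrow> 'e"
      have "norm (c *\<^sub>R L f) = \<bar>c\<bar> * norm (L f)" by simp
      also have "\<dots> \<le> \<bar>c\<bar> * (C1 * Lp_norm p M f)" using C1 by (intro mult_left_mono) auto
      finally show "norm (c *\<^sub>R L f) \<le> (\<bar>c\<bar> * C1) * Lp_norm p M f" by (simp add: mult.assoc)
    qed
  qed
  have B: "(\<Sum>i<n. norm (c *\<^sub>R L (\<lambda>\<omega>. indicator (A i) \<omega> *\<^sub>R x i))) \<le> \<bar>c\<bar> * tnorm p M L"
    if "\<forall>i<n. A i \<in> sets M" "disjoint_family_on A {..<n}"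
      "(\<integral>\<^sup>+\<omega>. ennreal (norm (\<Sum>i<n. indicator (A i) \<omega> *\<^sub>R x i) powr p) \<partial>M) \<le> 1" for n :: nat and A x
  proof -
    have "(\<Sum>i<n. norm (c *\<^sub>R L (\<lambda>\<omega>. indicator (A i) \<omega> *\<^sub>R x i)))
       = \<bar>c\<bar> * (\<Sum>i<n. norm (L (\<lambda>\<omega>. indicator (A i) \<omega> *\<^sub>R x i)))"
      by (simp add: sum_distrib_left)
    also have "\<dots> \<le> \<bar>c\<bar> * tnorm p M L"
      by (intro mult_left_mono tnorm_upper[OF L that]) auto
    finally show ?thesis .
  qed
  have "bdd_above (tnorm_set p M (\<lambda>Y. c *\<^sub>R L Y))" by (rule tnorm_set_le(1)) (rule B)
  then show "(\<lambda>Y. c *\<^sub>R L Y) \<in> Lambda_p p M" using bl unfolding Lambda_p_def by auto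
  show "tnorm p M (\<lambda>Y. c *\<^sub>R L Y) \<le> \<bar>c\<bar> * tnorm p M L" by (rule tnorm_set_le(2)) (rule B)
qed

lemma tnorm_scale:
  fixes L :: "('w \<Rightarrow> 'e::real_normed_vector) \<Rightarrow> 'f::real_normed_vector"
  assumes L: "L \<in> Lambda_p p M"
  shows "tnorm p M (\<lambda>Y. c *\<^sub>R L Y) = \<bar>c\<bar> * tnorm p M L"
proof (cases "c = 0")
  case True
  then show ?thesis using tnorm_zero by simp
next
  case False
  have cL: "(\<lambda>Y. c *\<^sub>R L Y) \<in> Lambda_p p M" by (rule Lambda_scale(1)[OF L])
  have "tnorm p M (\<lambda>Y. (1/c) *\<^sub>R (c *\<^sub>R L Y)) \<le> \<bar>1/c\<bar> * tnorm p M (\<lambda>Y. c *\<^sub>R L Y)"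
    by (rule Lambda_scale(2)[OF cL])
  then have "tnorm p M L \<le> \<bar>1/c\<bar> * tnorm p M (\<lambda>Y. c *\<^sub>R L Y)" using False by simp
  then have "\<bar>c\<bar> * tnorm p M L \<le> tnorm p M (\<lambda>Y. c *\<^sub>R L Y)" using False
    by (simp add: field_simps)
  then show ?thesis using Lambda_scale(2)[OF L, of c] by linarith
qed



lemma Lambda_complete:
  fixes S :: "nat \<Rightarrow> ('w \<Rightarrow> 'e::real_normed_vector) \<Rightarrow> 'f::banach"
  assumes M: "prob_space M" and p: "0 < p" and S: "\<And>n. S n \<in> Lambda_p p M"
    and cau: "\<forall>e>0. \<exists>N. \<forall>m\<ge>N. \<forall>n\<ge>N. tnorm p M (\<lambda>Y. S m Y - S n Y) < e"
  shows "\<exists>L\<in>Lambda_p p M. (\<lambda>n. tnorm p M (\<lambda>Y. S n Y - L Y)) \<longlonglongrightarrow> 0"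
proof -
  have bS: "bounded_linear_Lp p M (S n)" for n using S[of n] unfolding Lambda_p_def by auto
  have D: "(\<lambda>Y. S m Y - S n Y) \<in> Lambda_p p M" for m n
    using Lambda_add(1)[OF S[of m] Lambda_scale(1)[OF S[of n], of "-1"]] by simp
  have Dle: "norm (S m f - S n f) \<le> tnorm p M (\<lambda>Y. S m Y - S n Y) * Lp_norm p M f"
    if "f \<in> Lp_space p M" for m n f
    using K_gen[OF M p D that] by simp
  have cauchy: "Cauchy (\<lambda>n. S n f)" for f
  proof (cases "f \<in> Lp_space p M")
    case False
    then have "(\<lambda>n. S n f) = (\<lambda>n. 0)" using L_off[OF bS] by auto
    then show ?thesis by (simp add: convergent_Cauchy convergent_const)
  next
    case True
    show ?thesis
    proof (rule CauchyI)
      fix e :: real assume e: "0 < e"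
      define c where "c = Lp_norm p M f + 1"
      have c: "0 < c" unfolding c_def using Lp_norm_nonneg[of p M f] by linarith
      obtain N where N: "\<forall>m\<ge>N. \<forall>n\<ge>N. tnorm p M (\<lambda>Y. S m Y - S n Y) < e / c"
        using cau e c by (meson divide_pos_pos)
      show "\<exists>N. \<forall>m\<ge>N. \<forall>n\<ge>N. norm (S m f - S n f) < e"
      proof (intro exI allI impI)
        fix m n assume mn: "N \<le> m" "N \<le> n"
        have "norm (S m f - S n f) \<le> tnorm p M (\<lambda>Y. S m Y - S n Y) * Lp_norm p M f"
          by (rule Dle[OF True])
        also have "\<dots> \<le> (e / c) * Lp_norm p M f"
          using N mn by (intro mult_right_mono) (auto simp: Lp_norm_nonneg less_imp_le)
        also have "\<dots> < (e / c) * c"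
          using e c unfolding c_def by (intro mult_strict_left_mono) auto
        also have "\<dots> = e" using c by simp
        finally show "norm (S m f - S n f) < e" .
      qed
    qed
  qed
  define L where "L f = lim (\<lambda>n. S n f)" for f
  have conv: "(\<lambda>n. S n f) \<longlonglongrightarrow> L f" for f
    unfolding L_def using cauchy[of f] by (simp add: Cauchy_convergent_iff convergent_LIMSEQ_iff)
  obtain N1 where N1: "\<forall>m\<ge>N1. \<forall>n\<ge>N1. tnorm p M (\<lambda>Y. S m Y - S n Y) < 1"
    using cau by (meson zero_less_one)
  have bl: "bounded_linear_Lp p M L"
    unfolding bounded_linear_Lp_def
  proof (intro conjI ballI allI impI)
    fix f g :: "'w \<Rightarrow> 'e" assume f: "f \<in> Lp_space p M" and g: "g \<in> Lp_space p M"
    have "(\<lambda>n. S n f + S n g) \<longlonglongrightarrow> L f + L g" by (intro tendsto_add conv)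
    moreover have "(\<lambda>n. S n f + S n g) = (\<lambda>n. S n (\<lambda>x. f x + g x))"
      using L_add[OF bS f g] by simp
    ultimately show "L (\<lambda>x. f x + g x) = L f + L g"
      using conv[of "\<lambda>x. f x + g x"] LIMSEQ_unique by metis
    assume ae: "AE x in M. f x = g x"
    have "(\<lambda>n. S n f) = (\<lambda>n. S n g)" using L_ae[OF bS f g ae] by simp
    then show "L f = L g" unfolding L_def by simp
  next
    fix f :: "'w \<Rightarrow> 'e" and c assume f: "f \<in> Lp_space p M"
    have "(\<lambda>n. c *\<^sub>R S n f) \<longlonglongrightarrow> c *\<^sub>R L f" by (intro tendsto_scaleR tendsto_const conv)
    moreover have "(\<lambda>n. c *\<^sub>R S n f) = (\<lambda>n. S n (\<lambda>x. c *\<^sub>R f x))"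
      using L_scale[OF bS f] by simp
    ultimately show "L (\<lambda>x. c *\<^sub>R f x) = c *\<^sub>R L f"
      using conv[of "\<lambda>x. c *\<^sub>R f x"] LIMSEQ_unique by metis
  next
    fix f :: "'w \<Rightarrow> 'e" assume f: "f \<notin> Lp_space p M"
    have "(\<lambda>n. S n f) = (\<lambda>n. 0)" using L_off[OF bS f] by simp
    then show "L f = 0" unfolding L_def by simp
  next
    show "\<exists>C. \<forall>f\<in>Lp_space p M. norm (L f) \<le> C * Lp_norm p M f"
    proof (intro exI ballI)
      fix f :: "'w \<Rightarrow> 'e" assume f: "f \<in> Lp_space p M"
      have ev: "\<forall>\<^sub>F n in sequentially. norm (S n f) \<le> (tnorm p M (S N1) + 1) * Lp_norm p M f"
      proof (rule eventually_sequentiallyI[of N1])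
        fix n assume n: "N1 \<le> n"
        have "norm (S n f) \<le> norm (S N1 f) + norm (S n f - S N1 f)" by (rule norm_triangle_sub)
        also have "\<dots> \<le> tnorm p M (S N1) * Lp_norm p M f + tnorm p M (\<lambda>Y. S n Y - S N1 Y) * Lp_norm p M f"
          by (intro add_mono K_gen[OF M p S f] Dle[OF f])
        also have "\<dots> \<le> tnorm p M (S N1) * Lp_norm p M f + 1 * Lp_norm p M f"
          using N1 n by (intro add_mono mult_right_mono) (auto simp: Lp_norm_nonneg less_imp_le)
        finally show "norm (S n f) \<le> (tnorm p M (S N1) + 1) * Lp_norm p M f"
          by (simp add: distrib_right)
      qed
      show "norm (L f) \<le> (tnorm p M (S N1) + 1) * Lp_norm p M f"
        by (rule tendsto_le[OF sequentially_bot tendsto_const tendsto_norm[OF conv] ev])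
    qed
  qed
  have B1: "(\<Sum>i<n. norm (L (\<lambda>\<omega>. indicator (A i) \<omega> *\<^sub>R x i))) \<le> tnorm p M (S N1) + 1"
    if adm: "\<forall>i<n. A i \<in> sets M" "disjoint_family_on A {..<n}"
      "(\<integral>\<^sup>+\<omega>. ennreal (norm (\<Sum>i<n. indicator (A i) \<omega> *\<^sub>R x i) powr p) \<partial>M) \<le> 1"
    for n :: nat and A and x :: "nat \<Rightarrow> 'e"
  proof -
    let ?g = "\<lambda>i \<omega>. indicator (A i) \<omega> *\<^sub>R x i"
    have lim: "(\<lambda>m. \<Sum>i<n. norm (S m (?g i))) \<longlonglongrightarrow> (\<Sum>i<n. norm (L (?g i)))"
      by (intro tendsto_sum tendsto_norm conv)
    have ev: "\<forall>\<^sub>F m in sequentially. (\<Sum>i<n. norm (S m (?g i))) \<le> tnorm p M (S N1) + 1"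
    proof (rule eventually_sequentiallyI[of N1])
      fix m assume m: "N1 \<le> m"
      have "(\<Sum>i<n. norm (S m (?g i))) \<le> (\<Sum>i<n. norm (S N1 (?g i)) + norm (S m (?g i) - S N1 (?g i)))"
        by (intro sum_mono norm_triangle_sub)
      also have "\<dots> = (\<Sum>i<n. norm (S N1 (?g i))) + (\<Sum>i<n. norm (S m (?g i) - S N1 (?g i)))"
        by (rule sum.distrib)
      also have "\<dots> \<le> tnorm p M (S N1) + tnorm p M (\<lambda>Y. S m Y - S N1 Y)"
        by (intro add_mono tnorm_upper[OF S adm] tnorm_upper[OF D adm, simplified])
      also have "\<dots> \<le> tnorm p M (S N1) + 1" using N1 m by (intro add_mono) (auto simp: less_imp_le)
      finally show "(\<Sum>i<n. norm (S m (?g i))) \<le> tnorm p M (S N1) + 1" .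
    qed
    show ?thesis by (rule tendsto_le[OF sequentially_bot tendsto_const lim ev])
  qed
  have Lin: "L \<in> Lambda_p p M"
    unfolding Lambda_p_def using bl tnorm_set_le(1)[of M p L, OF B1] by auto
  have "(\<lambda>n. tnorm p M (\<lambda>Y. S n Y - L Y)) \<longlonglongrightarrow> 0"
  proof (rule LIMSEQ_I)
    fix r :: real assume r: "0 < r"
    obtain N where N: "\<forall>m\<ge>N. \<forall>n\<ge>N. tnorm p M (\<lambda>Y. S m Y - S n Y) < r / 2"
      using cau r by (meson half_gt_zero)
    show "\<exists>no. \<forall>n\<ge>no. norm (tnorm p M (\<lambda>Y. S n Y - L Y) - 0) < r"
    proof (intro exI allI impI)
      fix k assume k: "N \<le> k"
      have B2: "(\<Sum>i<n. norm (S k (\<lambda>\<omega>. indicator (A i) \<omega> *\<^sub>R x i) - L (\<lambda>\<omega>. indicator (A i) \<omega> *\<^sub>R x i))) \<le> r / 2"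
        if adm: "\<forall>i<n. A i \<in> sets M" "disjoint_family_on A {..<n}"
          "(\<integral>\<^sup>+\<omega>. ennreal (norm (\<Sum>i<n. indicator (A i) \<omega> *\<^sub>R x i) powr p) \<partial>M) \<le> 1"
        for n :: nat and A and x :: "nat \<Rightarrow> 'e"
      proof -
        let ?g = "\<lambda>i \<omega>. indicator (A i) \<omega> *\<^sub>R x i"
        have lim: "(\<lambda>m. \<Sum>i<n. norm (S k (?g i) - S m (?g i))) \<longlonglongrightarrow> (\<Sum>i<n. norm (S k (?g i) - L (?g i)))"
          by (intro tendsto_sum tendsto_norm tendsto_diff tendsto_const conv)
        have ev: "\<forall>\<^sub>F m in sequentially. (\<Sum>i<n. norm (S k (?g i) - S m (?g i))) \<le> r / 2"
        proof (rule eventually_sequentiallyI[of N])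
          fix m assume m: "N \<le> m"
          have "(\<Sum>i<n. norm (S k (?g i) - S m (?g i))) \<le> tnorm p M (\<lambda>Y. S k Y - S m Y)"
            using tnorm_upper[OF D adm] by simp
          also have "\<dots> \<le> r / 2" using N m k by (auto simp: less_imp_le)
          finally show "(\<Sum>i<n. norm (S k (?g i) - S m (?g i))) \<le> r / 2" .
        qed
        show ?thesis by (rule tendsto_le[OF sequentially_bot tendsto_const lim ev])
      qed
      have "tnorm p M (\<lambda>Y. S k Y - L Y) \<le> r / 2" by (rule tnorm_set_le(2)) (rule B2)
      moreover have "0 \<le> tnorm p M (\<lambda>Y. S k Y - L Y)"
        by (rule tnorm_nonneg, rule tnorm_set_le(1)) (rule B2)
      ultimately show "norm (tnorm p M (\<lambda>Y. S k Y - L Y) - 0) < r" using r by simp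
    qed
  qed
  then show ?thesis using Lin by blast
qed


theorem lemma2p19:
  fixes M :: "'w measure" and p :: real
  assumes "prob_space M" and "1 \<le> p"
  shows "(\<lambda>_. 0) \<in> (Lambda_p p M :: ('w, 'e::banach, 'f::banach) lp_op set)
    \<and> (\<forall>L::('w,'e,'f) lp_op \<in>Lambda_p p M. \<forall>K::('w,'e,'f) lp_op \<in>Lambda_p p M.
          (\<lambda>Y. L Y + K Y) \<in> Lambda_p p M)
    \<and> (\<forall>L::('w,'e,'f) lp_op \<in>Lambda_p p M. \<forall>c. (\<lambda>Y. c *\<^sub>R L Y) \<in> Lambda_p p M)
    \<and> (\<forall>L::('w,'e,'f) lp_op \<in>Lambda_p p M. 0 \<le> tnorm p M L)
    \<and> (\<forall>L::('w,'e,'f) lp_op \<in>Lambda_p p M. tnorm p M L = 0 \<longleftrightarrow> L = (\<lambda>_. 0))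
    \<and> (\<forall>L::('w,'e,'f) lp_op \<in>Lambda_p p M. \<forall>c.
          tnorm p M (\<lambda>Y. c *\<^sub>R L Y) = \<bar>c\<bar> * tnorm p M L)
    \<and> (\<forall>L::('w,'e,'f) lp_op \<in>Lambda_p p M. \<forall>K::('w,'e,'f) lp_op \<in>Lambda_p p M.
          tnorm p M (\<lambda>Y. L Y + K Y) \<le> tnorm p M L + tnorm p M K)
    \<and> (\<forall>S::nat \<Rightarrow> ('w,'e,'f) lp_op. (\<forall>n. S n \<in> Lambda_p p M) \<and>
          (\<forall>e>0. \<exists>N. \<forall>m\<ge>N. \<forall>n\<ge>N. tnorm p M (\<lambda>Y. S m Y - S n Y) < e)
          \<longrightarrow> (\<exists>L\<in>Lambda_p p M. (\<lambda>n. tnorm p M (\<lambda>Y. S n Y - L Y)) \<longlonglongrightarrow> 0))"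
proof -
  note M = assms(1)
  have p: "0 < p" using assms(2) by linarith
  have z: "tnorm p M L = 0 \<longleftrightarrow> L = (\<lambda>_. 0)" if L: "L \<in> (Lambda_p p M :: ('w, 'e, 'f) lp_op set)" for L
  proof
    assume t: "tnorm p M L = 0"
    have bl: "bounded_linear_Lp p M L" using L unfolding Lambda_p_def by auto
    show "L = (\<lambda>_. 0)"
    proof
      fix f :: "'w \<Rightarrow> 'e"
      show "L f = 0"
      proof (cases "f \<in> Lp_space p M")
        case True
        then show ?thesis using K_gen[OF M p L True] t by simp
      next
        case False
        then show ?thesis by (rule L_off[OF bl])
      qed
    qed
  next
    assume "L = (\<lambda>_. 0)"
    then show "tnorm p M L = 0" using tnorm_zero by simp
  qed
  have nn: "0 \<le> tnorm p M L" if "L \<in> (Lambda_p p M :: ('w, 'e, 'f) lp_op set)" for L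
    using that unfolding Lambda_p_def by (auto intro: tnorm_nonneg)
  show ?thesis
  proof (intro conjI ballI allI impI)
    show "(\<lambda>_. 0) \<in> (Lambda_p p M :: ('w, 'e, 'f) lp_op set)" by (rule Lambda_zero)
  next
    fix L K :: "('w, 'e, 'f) lp_op" assume "L \<in> Lambda_p p M" "K \<in> Lambda_p p M"
    then show "(\<lambda>Y. L Y + K Y) \<in> Lambda_p p M" by (rule Lambda_add(1))
  next
    fix L :: "('w, 'e, 'f) lp_op" and c assume "L \<in> Lambda_p p M"
    then show "(\<lambda>Y. c *\<^sub>R L Y) \<in> Lambda_p p M" by (rule Lambda_scale(1))
  next
    fix L :: "('w, 'e, 'f) lp_op" assume "L \<in> Lambda_p p M"
    then show "0 \<le> tnorm p M L" by (rule nn)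
  next
    fix L :: "('w, 'e, 'f) lp_op" assume "L \<in> Lambda_p p M"
    then show "tnorm p M L = 0 \<longleftrightarrow> L = (\<lambda>_. 0)" by (rule z)
  next
    fix L :: "('w, 'e, 'f) lp_op" and c assume "L \<in> Lambda_p p M"
    then show "tnorm p M (\<lambda>Y. c *\<^sub>R L Y) = \<bar>c\<bar> * tnorm p M L" by (rule tnorm_scale)
  next
    fix L K :: "('w, 'e, 'f) lp_op" assume "L \<in> Lambda_p p M" "K \<in> Lambda_p p M"
    then show "tnorm p M (\<lambda>Y. L Y + K Y) \<le> tnorm p M L + tnorm p M K" by (rule Lambda_add(2))
  next
    fix S :: "nat \<Rightarrow> ('w, 'e, 'f) lp_op"
    assume "(\<forall>n. S n \<in> Lambda_p p M) \<and>
          (\<forall>e>0. \<exists>N. \<forall>m\<ge>N. \<forall>n\<ge>N. tnorm p M (\<lambda>Y. S m Y - S n Y) < e)"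
    then show "\<exists>L\<in>Lambda_p p M. (\<lambda>n. tnorm p M (\<lambda>Y. S n Y - L Y)) \<longlonglongrightarrow> 0"
      using Lambda_complete[OF M p, of S] by blast
  qed
qed

end
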